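(* Let $G$ be a non-compact locally compact (Hausdorff) topological group and let $H$ be a subgroup of $G$ with $\{e\}\subsetneq H$. Then the pair $(G,H)$ is not relatively extremely amenable.
   Context: A $G$-space is a compact Hausdorff space with a continuous action of $G$. The pair $(G,H)$, with $H\subset G$ a subgroup, is relatively extremely amenable if every $G$-space $X$ has an $H$-fixed point, i.e. some $x_0\in X$ with $hx_0=x_0$ for all $h\in H$. *)

theory Defs
  imports "HOL-Analysis.Analysis"
begin

text \<open>Topological groups are modelled by the type class topological_group_add
 (a group_add, not necessarily commutative, with continuous addition and negation);
 the group operation g*h is written g + h, the identity e is 0.\<close>

definition is_subgroup :: "'g::group_add set \<Rightarrow> bool" where
  "is_subgroup H \<longleftrightarrow> 0 \<in> H \<and> (\<forall>x\<in>H. \<forall>y\<in>H. x + y \<in> H) \<and> (\<forall>x\<in>H. - x \<in> H)"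

definition G_space :: "'x topology \<Rightarrow> ('g::topological_group_add \<Rightarrow> 'x \<Rightarrow> 'x) \<Rightarrow> bool" where
  "G_space X a \<longleftrightarrow>
     topspace X \<noteq> {} \<and> compact_space X \<and> Hausdorff_space X \<and>
     (\<forall>g. \<forall>x\<in>topspace X. a g x \<in> topspace X) \<and>
     (\<forall>x\<in>topspace X. a 0 x = x) \<and>
     (\<forall>g h. \<forall>x\<in>topspace X. a (g + h) x = a g (a h x)) \<and>
     continuous_map (prod_topology euclidean X) X (\<lambda>(g, x). a g x)"

text \<open>(G,H) relatively extremely amenable, tested against all G-spaces carried by type 'x.\<close>
definition rel_ext_amenable :: "'x itself \<Rightarrow> 'g::topological_group_add set \<Rightarrow> bool" where
  "rel_ext_amenable _ H \<longleftrightarrow>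
     (\<forall>(X::'x topology) (a::'g \<Rightarrow> 'x \<Rightarrow> 'x). G_space X a \<longrightarrow>
        (\<exists>x0\<in>topspace X. \<forall>h\<in>H. a h x0 = x0))"

end

theory Submission
  imports Defs
begin


lemma G_space_transfer:
  fixes X :: "'y topology" and a :: "'g::topological_group_add \<Rightarrow> 'y \<Rightarrow> 'y" and f :: "'y \<Rightarrow> 'z"
  assumes G: "G_space X a" and inj: "inj f"
  shows "\<exists>(Y::'z topology) b. G_space Y b \<and>
     (\<forall>k. \<forall>y\<in>topspace Y. b k y = y \<longrightarrow> (\<exists>x\<in>topspace X. a k x = x))"
proof -
  define g where "g = inv f"
  have gf: "g (f x) = x" for x using inj by (simp add: g_def)
  define Y where "Y = pullback_topology (f ` topspace X) g X"
  have tY: "topspace Y = f ` topspace X"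
    unfolding Y_def topspace_pullback_topology using gf by auto
  have cf: "continuous_map X Y f"
    unfolding Y_def
    by (rule continuous_map_pullback') (auto simp: o_def gf)
  have cg: "continuous_map Y X g"
    using continuous_map_pullback[OF continuous_map_id, of "f ` topspace X" g] unfolding Y_def by (simp add: o_def)
  have hm: "homeomorphic_maps X Y f g"
    unfolding homeomorphic_maps_def using cf cg tY gf by auto
  then have hs: "X homeomorphic_space Y" unfolding homeomorphic_space_def by blast
  define b where "b = (\<lambda>k y. f (a k (g y)))"
  have GX: "topspace X \<noteq> {}" "compact_space X" "Hausdorff_space X"
     "\<forall>k. \<forall>x\<in>topspace X. a k x \<in> topspace X"
     "\<forall>x\<in>topspace X. a 0 x = x"
     "\<forall>k l. \<forall>x\<in>topspace X. a (k + l) x = a k (a l x)"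
     "continuous_map (prod_topology euclidean X) X (\<lambda>(k, x). a k x)"
    using G unfolding G_space_def by auto
  have "G_space Y b"
    unfolding G_space_def
  proof (intro conjI)
    show "topspace Y \<noteq> {}" using tY GX by auto
    show "compact_space Y" using GX hs homeomorphic_compact_space by blast
    show "Hausdorff_space Y" using GX hs homeomorphic_Hausdorff_space by blast
    show "\<forall>k. \<forall>x\<in>topspace Y. b k x \<in> topspace Y" using GX tY by (auto simp: b_def gf)
    show "\<forall>x\<in>topspace Y. b 0 x = x" using GX tY by (auto simp: b_def gf)
    show "\<forall>k l. \<forall>x\<in>topspace Y. b (k + l) x = b k (b l x)" using GX tY by (auto simp: b_def gf)
    have c1: "continuous_map (prod_topology euclidean Y) (prod_topology euclidean X) (\<lambda>(k, y). (k, g y))"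
      unfolding continuous_map_pairwise case_prod_unfold
      using continuous_map_fst continuous_map_compose[OF continuous_map_snd cg]
      by (auto simp: o_def)
    have "continuous_map (prod_topology euclidean Y) Y (f \<circ> (\<lambda>(k, x). a k x) \<circ> (\<lambda>(k, y). (k, g y)))"
      using continuous_map_compose[OF continuous_map_compose[OF c1 GX(7)] cf] by (simp add: o_assoc)
    then show "continuous_map (prod_topology euclidean Y) Y (\<lambda>(k, x). b k x)"
      by (simp add: b_def o_def case_prod_unfold)
  qed
  moreover have "\<forall>k. \<forall>y\<in>topspace Y. b k y = y \<longrightarrow> (\<exists>x\<in>topspace X. a k x = x)"
  proof (intro allI ballI impI)
    fix k y assume y: "y \<in> topspace Y" and e: "b k y = y"
    then obtain x where x: "x \<in> topspace X" "y = f x" using tY by auto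
    then have "f (a k x) = f x" using e by (simp add: b_def gf)
    then show "\<exists>x\<in>topspace X. a k x = x" using x inj by (auto dest: injD)
  qed
  ultimately show ?thesis by blast
qed



lemma inj_cut: "inj (\<lambda>t::real. to_nat ` {q::rat. of_rat q < t})"
proof (rule injI)
  fix s t :: real assume e: "to_nat ` {q::rat. of_rat q < s} = to_nat ` {q::rat. of_rat q < t}"
  have inj': "inj (to_nat :: rat \<Rightarrow> nat)" by simp
  then have e2: "{q::rat. of_rat q < s} = {q::rat. of_rat q < t}"
    using e by (simp add: inj_image_eq_iff)
  show "s = t"
  proof (rule ccontr)
    assume "s \<noteq> t"
    then consider "s < t" | "t < s" by linarith
    then show False
    proof cases
      case 1
      then obtain q where "s < of_rat q" "of_rat q < t" using of_rat_dense by blast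
      then show False using e2 by (metis (mono_tags, lifting) mem_Collect_eq order.asym)
    next
      case 2
      then obtain q where "t < of_rat q" "of_rat q < s" using of_rat_dense by blast
      then show False using e2 by (metis (mono_tags, lifting) mem_Collect_eq order.asym)
    qed
  qed
qed


lemma inj_pair_nat:
  assumes "infinite (UNIV :: 'g set)"
  shows "\<exists>j :: 'g \<times> nat \<Rightarrow> 'g. inj j"
proof -
  have "(card_of (UNIV::nat set), card_of (UNIV::'g set)) \<in> ordLeq"
    using infinite_iff_card_of_nat[THEN iffD1, OF assms] .
  then have "(card_of ((UNIV::'g set) \<times> (UNIV::nat set)), card_of ((UNIV::'g set) \<times> (UNIV::'g set))) \<in> ordLeq"
    by (rule card_of_Times_mono2)
  moreover have "(card_of ((UNIV::'g set) \<times> (UNIV::'g set)), card_of (UNIV::'g set)) \<in> ordIso"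
    by (rule card_of_Times_same_infinite[OF assms])
  ultimately have "(card_of ((UNIV::'g set) \<times> (UNIV::nat set)), card_of (UNIV::'g set)) \<in> ordLeq"
    by (rule ordLeq_ordIso_trans)
  then obtain j :: "'g \<times> nat \<Rightarrow> 'g" where j: "inj_on j ((UNIV::'g set) \<times> (UNIV::nat set))"
    using card_of_ordLeq[of "(UNIV::'g set) \<times> (UNIV::nat set)" "UNIV::'g set"] by blast
  have "inj j" using j by (simp only: UNIV_Times_UNIV)
  then show ?thesis by blast
qed
lemma inj_encode:
  assumes "infinite (UNIV :: 'g set)"
  shows "\<exists>f :: ('g \<times> nat \<Rightarrow> real) \<Rightarrow> 'g set set. inj f"
proof -
  obtain j :: "'g \<times> nat \<Rightarrow> 'g" where j: "inj j" using inj_pair_nat[OF assms] by blast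
  define c where "c = (\<lambda>t::real. to_nat ` {q::rat. of_rat q < t})"
  define f where "f = (\<lambda>\<phi>::'g \<times> nat \<Rightarrow> real.
     (\<lambda>(y,k,n). {j (y, prod_encode (k,n))}) ` {(y,k,n). n \<in> c (\<phi> (y,k))})"
  have "inj f"
  proof (rule injI)
    fix \<phi> \<psi> assume e: "f \<phi> = f \<psi>"
    have ij: "inj (\<lambda>(y,k,n). {j (y, prod_encode (k,n))})"
    proof (rule injI, clarsimp)
      fix y k n y' k' n' assume "j (y, prod_encode (k, n)) = j (y', prod_encode (k', n'))"
      then have "(y, prod_encode (k, n)) = (y', prod_encode (k', n'))" using injD[OF j] by blast
      then show "y = y' \<and> k = k' \<and> n = n'" using prod_encode_eq by auto
    qed
    then have "{(y,k,n). n \<in> c (\<phi> (y,k))} = {(y,k,n). n \<in> c (\<psi> (y,k))}"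
      using e unfolding f_def by (subst (asm) inj_image_eq_iff[OF ij])
    then have S: "(y,k,n) \<in> {(y,k,n). n \<in> c (\<phi> (y,k))} \<longleftrightarrow> (y,k,n) \<in> {(y,k,n). n \<in> c (\<psi> (y,k))}" for y k n
      by simp
    have "c (\<phi> (y,k)) = c (\<psi> (y,k))" for y k
    proof (rule set_eqI)
      fix n show "n \<in> c (\<phi> (y,k)) \<longleftrightarrow> n \<in> c (\<psi> (y,k))" using S[of y k n] by simp
    qed
    then have "c (\<phi> p) = c (\<psi> p)" for p by (cases p) simp
    then have "\<phi> p = \<psi> p" for p unfolding c_def by (rule injD[OF inj_cut])
    then show "\<phi> = \<psi>" by blast
  qed
  then show ?thesis by blast
qed



lemma exists_bump:
  fixes h :: "'g::{topological_group_add,t2_space}"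
  assumes lc: "locally_compact_space (euclidean :: 'g topology)" and h: "h \<noteq> 0"
  shows "\<exists>(u::'g \<Rightarrow> real) K. continuous_on UNIV u \<and> (\<forall>x. 0 \<le> u x \<and> u x \<le> 1) \<and> u 0 = 1 \<and> u h = 0
           \<and> compact K \<and> (\<forall>x. u x \<noteq> 0 \<longrightarrow> x \<in> K)"
proof -
  obtain U K where UK: "openin euclidean U" "compactin euclidean K" "(0::'g) \<in> U" "U \<subseteq> K"
    using lc unfolding locally_compact_space_def by (metis openin_open compactin_euclidean_iff topspace_euclidean UNIV_I)
  have "Hausdorff_space (euclidean :: 'g topology)"
    unfolding Hausdorff_space_def by (metis disjnt_def hausdorff open_openin)
  then have cr: "completely_regular_space (euclidean :: 'g topology)"
    using lc locally_compact_regular_imp_completely_regular_space by blast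
  have cl: "closedin euclidean ((UNIV - U) \<union> {h})"
    using UK(1) by (auto intro: closed_Un simp: closed_Diff)
  have dj: "disjnt {0} ((UNIV - U) \<union> {h})" using UK(3) h by auto
  obtain f where f: "continuous_map euclidean (top_of_set {0..1::real}) f"
    "f ` ((UNIV - U) \<union> {h}) \<subseteq> {0}" "f ` {0} \<subseteq> {1}"
    using Urysohn_completely_regular_compact_closed[of 0 1 euclidean "{0}" "(UNIV - U) \<union> {h}"]
      cr cl dj by auto
  have "continuous_on UNIV f" using f(1)
    by (metis continuous_map_iff_continuous2 continuous_map_into_fulltopology)
  moreover have "\<forall>x. 0 \<le> f x \<and> f x \<le> 1" using f(1) by (auto simp: continuous_map_in_subtopology)
  moreover have "f 0 = 1" "f h = 0" using f by auto
  moreover have "\<forall>x. f x \<noteq> 0 \<longrightarrow> x \<in> K" using f(2) UK(4) by blast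
  ultimately show ?thesis using UK(2) by auto
qed



lemma tri_half: "\<bar>a - c\<bar> < e/2 \<Longrightarrow> \<bar>b - c\<bar> < e/2 \<Longrightarrow> \<bar>a - b\<bar> < (e::real)"
  by linarith

locale bump =
  fixes u :: "'g::{topological_group_add,t2_space} \<Rightarrow> real" and K :: "'g set" and h :: 'g
  assumes u_cont: "continuous_on UNIV u"
    and u01: "\<And>x. 0 \<le> u x \<and> u x \<le> 1"
    and u0: "u 0 = 1" and uh: "u h = 0"
    and K: "compact K" and uK: "\<And>x. u x \<noteq> 0 \<Longrightarrow> x \<in> K"
begin

lemma local_nbhd:
  assumes e: "e > 0"
  shows "\<exists>Q. open Q \<and> (0::'g) \<in> Q \<and> (\<forall>a\<in>Q. \<forall>b\<in>Q. \<bar>u (a + b + p) - u p\<bar> < e)"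
proof -
  define W where "W = {q::'g \<times> 'g. \<bar>u (fst q + snd q + p) - u p\<bar> < e}"
  have "continuous_on UNIV (\<lambda>q::'g \<times> 'g. u (fst q + snd q + p))"
    by (intro continuous_on_compose2[OF u_cont] continuous_intros) auto
  then have "continuous_on UNIV (\<lambda>q::'g \<times> 'g. \<bar>u (fst q + snd q + p) - u p\<bar>)"
    by (intro continuous_intros)
  then have "open W" unfolding W_def
    using open_Collect_less[of "\<lambda>q::'g \<times> 'g. \<bar>u (fst q + snd q + p) - u p\<bar>" "\<lambda>_. e"]
    by (simp add: continuous_on_const)
  moreover have "(0,0) \<in> W" using e by (simp add: W_def)
  ultimately obtain A B where AB: "open A" "open B" "0 \<in> A" "0 \<in> B" "A \<times> B \<subseteq> W"
    by (metis open_prod_elim mem_Times_iff fst_conv snd_conv)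
  show ?thesis
    by (rule exI[of _ "A \<inter> B"]) (use AB in \<open>auto simp: W_def\<close>)
qed

lemma uc:
  assumes e: "e > 0"
  shows "\<exists>N. open N \<and> (0::'g) \<in> N \<and> (\<forall>w\<in>N. \<forall>z. \<bar>u (w + z) - u z\<bar> < e)"
proof -
  have e2: "e/2 > 0" using e by simp
  have "\<forall>p. \<exists>Q. open Q \<and> (0::'g) \<in> Q \<and> (\<forall>a\<in>Q. \<forall>b\<in>Q. \<bar>u (a + b + p) - u p\<bar> < e/2)"
    using local_nbhd[OF e2] by blast
  then obtain Q where Q: "\<And>p. open (Q p) \<and> (0::'g) \<in> Q p \<and> (\<forall>a\<in>Q p. \<forall>b\<in>Q p. \<bar>u (a + b + p) - u p\<bar> < e/2)"
    by (metis choice)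
  define Qp where "Qp p = Q p \<inter> uminus -` Q p" for p
  have Qpo: "open (Qp p)" for p
    unfolding Qp_def using Q[of p]
    by (intro open_Int) (auto intro!: open_vimage continuous_on_minus continuous_on_id)
  have Qp0: "0 \<in> Qp p" for p using Q[of p] by (simp add: Qp_def)
  define C where "C p = (\<lambda>x. x - p) -` Qp p" for p
  have Co: "open (C p)" for p unfolding C_def
    by (rule open_vimage[OF Qpo]) (intro continuous_intros)
  have KC: "K \<subseteq> (\<Union>p\<in>K. C p)" using Qp0 by (auto simp: C_def)
  obtain P where P: "P \<subseteq> K" "finite P" "K \<subseteq> (\<Union>p\<in>P. C p)"
    using compactE_image[OF K, of K C] Co KC by blast
  define N where "N = (\<Inter>p\<in>P. Qp p)"
  have "open N" unfolding N_def using P(2) Qpo by (intro open_INT) auto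
  moreover have "0 \<in> N" using Qp0 by (simp add: N_def)
  moreover have "\<bar>u (w + z) - u z\<bar> < e" if w: "w \<in> N" for w z
  proof -
    have wO: "w \<in> Q p" "- w \<in> Q p" if "p \<in> P" for p using w that by (auto simp: N_def Qp_def)
    consider "z \<in> K" | "w + z \<in> K" | "z \<notin> K" "w + z \<notin> K" by blast
    then show ?thesis
    proof cases
      case 1
      then obtain p where p: "p \<in> P" "z - p \<in> Qp p" using P(3) by (auto simp: C_def)
      have b: "z - p \<in> Q p" using p by (simp add: Qp_def)
      have "\<bar>u (w + (z - p) + p) - u p\<bar> < e/2" using Q[of p] wO(1)[OF p(1)] b by blast
      moreover have "\<bar>u (0 + (z - p) + p) - u p\<bar> < e/2" using Q[of p] b by blast
      moreover have "w + (z - p) + p = w + z" "0 + (z - p) + p = z" by (simp_all add: add.assoc)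
      ultimately have "\<bar>u (w + z) - u p\<bar> < e/2" "\<bar>u z - u p\<bar> < e/2" by (simp_all only:)
      then show ?thesis by (rule tri_half)
    next
      case 2
      then obtain p where p: "p \<in> P" "w + z - p \<in> Qp p" using P(3) by (auto simp: C_def)
      have b: "w + z - p \<in> Q p" using p by (simp add: Qp_def)
      have A1: "\<bar>u (- w + (w + z - p) + p) - u p\<bar> < e/2" using Q[of p] wO(2)[OF p(1)] b by blast
      have A2: "\<bar>u (0 + (w + z - p) + p) - u p\<bar> < e/2" using Q[of p] b by blast
      have eq1: "- w + (w + z - p) + p = z"
        by (simp add: add.assoc)
      have eq2: "0 + (w + z - p) + p = w + z" by simp
      have "\<bar>u z - u p\<bar> < e/2" "\<bar>u (w + z) - u p\<bar> < e/2"
        using A1 A2 unfolding eq1 eq2 by auto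
      then have "\<bar>u z - u (w + z)\<bar> < e" by (rule tri_half)
      then show ?thesis by (simp add: abs_minus_commute)
    next
      case 3
      then have "u z = 0" "u (w + z) = 0" using uK by blast+
      then show ?thesis using e by simp
    qed
  qed
  ultimately show ?thesis by blast
qed

end


context bump begin

definition rho :: "'g \<Rightarrow> 'g \<Rightarrow> real" where
  "rho x y = (SUP z. \<bar>u (x + z) - u (y + z)\<bar>)"

lemma rho_bdd: "bdd_above (range (\<lambda>z. \<bar>u (x + z) - u (y + z)\<bar>))"
proof (rule bdd_aboveI2[where M=1])
  fix z show "\<bar>u (x + z) - u (y + z)\<bar> \<le> 1" using u01[of "x+z"] u01[of "y+z"] by linarith
qed

lemma rho_ge: "\<bar>u (x + z) - u (y + z)\<bar> \<le> rho x y"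
  unfolding rho_def by (rule cSUP_upper[OF UNIV_I rho_bdd])

lemma rho_le: "(\<And>z. \<bar>u (x + z) - u (y + z)\<bar> \<le> c) \<Longrightarrow> rho x y \<le> c"
  unfolding rho_def by (rule cSUP_least) auto

lemma rho_nonneg: "0 \<le> rho x y"
  using rho_ge[of x 0 y] by linarith

lemma rho_le1: "rho x y \<le> 1"
  by (rule rho_le) (use u01 in \<open>smt (verit)\<close>)

lemma rho_refl: "rho x x = 0"
  using rho_nonneg[of x x] rho_le[of x x 0] by simp

lemma rho_sym: "rho x y = rho y x"
proof -
  have "rho x y \<le> rho y x" by (rule rho_le) (metis abs_minus_commute rho_ge)
  moreover have "rho y x \<le> rho x y" by (rule rho_le) (metis abs_minus_commute rho_ge)
  ultimately show ?thesis by simp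
qed

lemma rho_tri: "rho x z \<le> rho x y + rho y z"
proof (rule rho_le)
  fix w
  have "\<bar>u (x + w) - u (z + w)\<bar> \<le> \<bar>u (x + w) - u (y + w)\<bar> + \<bar>u (y + w) - u (z + w)\<bar>" by linarith
  also have "\<dots> \<le> rho x y + rho y z" using rho_ge[of x w y] rho_ge[of y w z] by linarith
  finally show "\<bar>u (x + w) - u (z + w)\<bar> \<le> rho x y + rho y z" .
qed

lemma rho_inv: "rho (x + k) (y + k) = rho x y"
proof -
  have "rho (x + k) (y + k) \<le> rho x y"
  proof (rule rho_le)
    fix z show "\<bar>u (x + k + z) - u (y + k + z)\<bar> \<le> rho x y"
      using rho_ge[of x "k + z" y] by (simp add: add.assoc)
  qed
  moreover have "rho x y \<le> rho (x + k) (y + k)"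
  proof (rule rho_le)
    fix z
    have "x + k + (- k + z) = x + z" "y + k + (- k + z) = y + z" by (simp_all add: add.assoc)
    then show "\<bar>u (x + z) - u (y + z)\<bar> \<le> rho (x + k) (y + k)"
      using rho_ge[of "x + k" "- k + z" "y + k"] by simp
  qed
  ultimately show ?thesis by simp
qed

lemma rho_shift: "rho x y = rho (x - y) 0"
  using rho_inv[of "x - y" y 0] by simp

lemma rho_h: "rho h 0 = 1"
  using rho_ge[of h 0 0] rho_le1[of h 0] u0 uh by simp

lemma rho_K: "rho y 0 < 1 \<Longrightarrow> y \<in> K"
  using rho_ge[of y 0 0] u0 uK[of y] by fastforce

lemma rho_small:
  assumes "e > 0" shows "\<exists>N. open N \<and> 0 \<in> N \<and> (\<forall>w\<in>N. rho w 0 < e)"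
proof -
  obtain N where N: "open N" "0 \<in> N" "\<forall>w\<in>N. \<forall>z. \<bar>u (w + z) - u z\<bar> < e/2"
    using uc[of "e/2"] assms by auto
  have "rho w 0 \<le> e/2" if "w \<in> N" for w
    by (rule rho_le) (use N that in \<open>auto intro: less_imp_le\<close>)
  then show ?thesis using N assms by (intro exI[of _ N]) force
qed

lemma rho_nbhd:
  assumes "e > 0" shows "\<exists>V. open V \<and> p \<in> V \<and> (\<forall>v\<in>V. rho v p < e)"
proof -
  obtain N where N: "open N" "0 \<in> N" "\<forall>w\<in>N. rho w 0 < e"
    using rho_small[OF assms] by auto
  define V where "V = (\<lambda>v. v - p) -` N"
  have "open V" unfolding V_def by (rule open_vimage[OF N(1)]) (intro continuous_intros)
  moreover have "p \<in> V" using N by (simp add: V_def)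
  moreover have "\<forall>v\<in>V. rho v p < e" using N by (auto simp: V_def rho_shift[of _ p])
  ultimately show ?thesis by blast
qed

lemma rho_ball_open: "open {v. rho v c < r}"
proof (rule Topological_Spaces.openI)
  fix v assume "v \<in> {v. rho v c < r}"
  then have e: "r - rho v c > 0" by simp
  obtain V where V: "open V" "v \<in> V" "\<forall>x\<in>V. rho x v < r - rho v c"
    using rho_nbhd[OF e] by auto
  have "V \<subseteq> {v. rho v c < r}"
  proof
    fix x assume "x \<in> V"
    then have "rho x v < r - rho v c" using V by auto
    then show "x \<in> {v. rho v c < r}" using rho_tri[of x c v] by simp
  qed
  then show "\<exists>T. open T \<and> v \<in> T \<and> T \<subseteq> {v. rho v c < r}" using V by blast
qed

end


context bump begin

lemma sep_exists:
  "\<exists>D. (\<forall>d\<in>D. \<forall>d'\<in>D. d \<noteq> d' \<longrightarrow> 1/4 \<le> rho d d') \<and> (\<forall>y. \<exists>d\<in>D. rho y d < 1/4)"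
proof -
  define A where "A = {D. \<forall>d\<in>D. \<forall>d'\<in>D. d \<noteq> d' \<longrightarrow> 1/4 \<le> rho d d'}"
  have "\<forall>C\<in>chains A. \<Union>C \<in> A"
  proof
    fix C assume C: "C \<in> chains A"
    show "\<Union>C \<in> A" unfolding A_def
    proof (intro CollectI ballI impI)
      fix d d' assume d: "d \<in> \<Union>C" and d': "d' \<in> \<Union>C" and ne: "d \<noteq> d'"
      obtain D1 D2 where "D1 \<in> C" "D2 \<in> C" "d \<in> D1" "d' \<in> D2" using d d' by blast
      moreover have "D1 \<subseteq> D2 \<or> D2 \<subseteq> D1" using C calculation unfolding chains_def chain_subset_def by blast
      moreover have "D1 \<in> A" "D2 \<in> A" using C calculation unfolding chains_def by blast+
      ultimately show "1/4 \<le> rho d d'" using ne unfolding A_def by blast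
    qed
  qed
  then obtain M where M: "M \<in> A" "\<forall>X\<in>A. M \<subseteq> X \<longrightarrow> X = M" using Zorn_Lemma by blast
  have "\<exists>d\<in>M. rho y d < 1/4" for y
  proof (rule ccontr)
    assume "\<not> (\<exists>d\<in>M. rho y d < 1/4)"
    then have far: "\<forall>d\<in>M. 1/4 \<le> rho y d" by auto
    have "insert y M \<in> A" using M(1) far unfolding A_def by (auto simp: rho_sym)
    then have "insert y M = M" using M(2) by blast
    then have "y \<in> M" by blast
    then show False using far rho_refl[of y] by force
  qed
  then show ?thesis using M(1) unfolding A_def by blast
qed

definition C0 :: "'g set" where "C0 = (\<lambda>q. fst q + h + snd q) ` (K \<times> K)"
definition C1 :: "'g set" where "C1 = C0 \<union> uminus ` C0"

lemma C1_compact: "compact C1"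
proof -
  have "compact C0" unfolding C0_def
    by (intro compact_continuous_image compact_Times K continuous_intros)
  moreover then have "compact (uminus ` C0)"
    by (intro compact_continuous_image continuous_intros)
  ultimately show ?thesis unfolding C1_def by (rule compact_Un)
qed

lemma C1_sym: "x \<in> C1 \<Longrightarrow> - x \<in> C1"
  unfolding C1_def by force

lemma finite_cover: "\<exists>Ctr. finite Ctr \<and> C1 \<subseteq> (\<Union>c\<in>Ctr. {v. rho v c < 1/8})"
proof -
  have "C1 \<subseteq> (\<Union>c\<in>C1. {v. rho v c < 1/8})" using rho_refl by auto
  then obtain Ctr where "Ctr \<subseteq> C1" "finite Ctr" "C1 \<subseteq> (\<Union>c\<in>Ctr. {v. rho v c < 1/8})"
    using compactE_image[OF C1_compact, of C1 "\<lambda>c. {v. rho v c < 1/8}"] rho_ball_open by blast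
  then show ?thesis by blast
qed

definition E :: "'g \<Rightarrow> 'g \<Rightarrow> bool" where "E d d' \<longleftrightarrow> d \<noteq> d' \<and> d' - d \<in> C1"

lemma E_sym: "E d d' \<Longrightarrow> E d' d"
  unfolding E_def using C1_sym[of "d' - d"] by (auto simp: minus_diff_eq)

lemma degree_bound:
  assumes sep: "\<forall>d\<in>D. \<forall>d'\<in>D. d \<noteq> d' \<longrightarrow> 1/4 \<le> rho d d'"
    and Ctr: "finite Ctr" "C1 \<subseteq> (\<Union>c\<in>Ctr. {v. rho v c < 1/8})"
  shows "finite {d'\<in>D. E d d'} \<and> card {d'\<in>D. E d d'} \<le> card Ctr"
proof -
  define Nb where "Nb = {d'\<in>D. E d d'}"
  define m where "m d' = (SOME c. c \<in> Ctr \<and> rho (d' - d) c < 1/8)" for d'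
  have m: "m d' \<in> Ctr \<and> rho (d' - d) (m d') < 1/8" if "d' \<in> Nb" for d'
  proof -
    have "d' - d \<in> C1" using that by (simp add: Nb_def E_def)
    then have "\<exists>c. c \<in> Ctr \<and> rho (d' - d) c < 1/8" using Ctr(2) by blast
    then show ?thesis unfolding m_def by (rule someI_ex)
  qed
  have "inj_on m Nb"
  proof (rule inj_onI)
    fix x y assume x: "x \<in> Nb" and y: "y \<in> Nb" and e: "m x = m y"
    have "rho (x - d) (y - d) \<le> rho (x - d) (m x) + rho (m x) (y - d)" by (rule rho_tri)
    also have "\<dots> < 1/4" using m[OF x] m[OF y] e rho_sym[of "m y" "y - d"] by simp
    finally have "rho (x - d) (y - d) < 1/4" .
    moreover have "rho (x - d) (y - d) = rho x y" using rho_inv[of x "- d" y] by simp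
    ultimately have "rho x y < 1/4" by simp
    then show "x = y" using sep x y unfolding Nb_def by force
  qed
  moreover have "m ` Nb \<subseteq> Ctr" using m by blast
  ultimately show ?thesis
    using inj_on_finite card_inj_on_le Ctr(1) unfolding Nb_def by metis
qed

end


context bump begin

lemma coloring_exists:
  assumes deg: "\<And>d. d \<in> D \<Longrightarrow> finite {d'\<in>D. E d d'} \<and> card {d'\<in>D. E d d'} \<le> n"
  shows "\<exists>col. (\<forall>d\<in>D. col d \<le> n) \<and> (\<forall>d\<in>D. \<forall>d'\<in>D. E d d' \<longrightarrow> col d \<noteq> col d')"
proof -
  define A where "A = {P. P \<subseteq> D \<times> {..n} \<and>
     (\<forall>p\<in>P. \<forall>q\<in>P. (fst p = fst q \<longrightarrow> snd p = snd q) \<and> (E (fst p) (fst q) \<longrightarrow> snd p \<noteq> snd q))}"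
  have "\<forall>C\<in>chains A. \<Union>C \<in> A"
  proof
    fix C assume C: "C \<in> chains A"
    have sub: "\<Union>C \<subseteq> D \<times> {..n}" using C unfolding chains_def A_def by blast
    have "(fst p = fst q \<longrightarrow> snd p = snd q) \<and> (E (fst p) (fst q) \<longrightarrow> snd p \<noteq> snd q)"
      if p: "p \<in> \<Union>C" and q: "q \<in> \<Union>C" for p q
    proof -
      obtain P1 P2 where "P1 \<in> C" "P2 \<in> C" "p \<in> P1" "q \<in> P2" using p q by blast
      moreover have "P1 \<subseteq> P2 \<or> P2 \<subseteq> P1" using C calculation unfolding chains_def chain_subset_def by blast
      moreover have "P1 \<in> A" "P2 \<in> A" using C calculation unfolding chains_def by blast+
      ultimately show ?thesis unfolding A_def by blast
    qed
    then show "\<Union>C \<in> A" using sub unfolding A_def by blast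
  qed
  then obtain M where M: "M \<in> A" "\<forall>X\<in>A. M \<subseteq> X \<longrightarrow> X = M" using Zorn_Lemma by blast
  have MA: "M \<subseteq> D \<times> {..n}"
    "\<And>p q. p \<in> M \<Longrightarrow> q \<in> M \<Longrightarrow> fst p = fst q \<Longrightarrow> snd p = snd q"
    "\<And>p q. p \<in> M \<Longrightarrow> q \<in> M \<Longrightarrow> E (fst p) (fst q) \<Longrightarrow> snd p \<noteq> snd q"
    using M(1) unfolding A_def by blast+
  have tot: "\<exists>i. (d, i) \<in> M" if d: "d \<in> D" for d
  proof (rule ccontr)
    assume nd: "\<not> (\<exists>i. (d, i) \<in> M)"
    define Nb where "Nb = {d'\<in>D. E d d'}"
    define Used where "Used = {j. \<exists>d'\<in>Nb. (d', j) \<in> M}"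
    define g where "g d' = (SOME j. (d', j) \<in> M)" for d'
    have "Used \<subseteq> g ` Nb"
    proof
      fix j assume "j \<in> Used"
      then obtain d' where d': "d' \<in> Nb" "(d', j) \<in> M" unfolding Used_def by blast
      then have "(d', g d') \<in> M" unfolding g_def by (metis someI_ex)
      then have "g d' = j" using MA(2)[OF _ d'(2)] by fastforce
      then show "j \<in> g ` Nb" using d'(1) by blast
    qed
    moreover have fin: "finite Nb" "card Nb \<le> n" using deg[OF d] unfolding Nb_def by auto
    ultimately have "card Used \<le> n" "finite Used"
      using card_image_le[OF fin(1), of g] card_mono[of "g ` Nb" Used] finite_subset[of Used "g ` Nb"]
      by (auto intro: order_trans)
    then have cu: "card Used < card {..n}" by simp
    have "\<not> {..n} \<subseteq> Used"
    proof
      assume "{..n} \<subseteq> Used"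
      then have "card {..n} \<le> card Used" using \<open>finite Used\<close> by (rule card_mono[rotated])
      then show False using cu by simp
    qed
    then obtain i where i: "i \<in> {..n}" "i \<notin> Used" by blast
    have "insert (d, i) M \<in> A"
      unfolding A_def
    proof (rule CollectI, rule conjI)
      show "insert (d, i) M \<subseteq> D \<times> {..n}" using MA(1) d i by auto
    next
      show "\<forall>p\<in>insert (d, i) M. \<forall>q\<in>insert (d, i) M. (fst p = fst q \<longrightarrow> snd p = snd q) \<and> (E (fst p) (fst q) \<longrightarrow> snd p \<noteq> snd q)"
      proof (intro ballI)
      fix p q assume p: "p \<in> insert (d, i) M" and q: "q \<in> insert (d, i) M"
      obtain a j where pj: "p = (a, j)" by (cases p)
      obtain b k where qk: "q = (b, k)" by (cases q)
      have pq: "(a, j) \<in> insert (d, i) M" "(b, k) \<in> insert (d, i) M" using p q pj qk by simp_all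
      have nb: "x \<in> Nb" if "(x, l) \<in> M" "E d x" for x l
        using that MA(1) unfolding Nb_def by blast
      have usedI: "l \<in> Used" if "(x, l) \<in> M" "E d x" for x l
        using that nb unfolding Used_def by blast
      have "(a = b \<longrightarrow> j = k) \<and> (E a b \<longrightarrow> j \<noteq> k)"
      proof (cases "(a, j) = (d, i)")
        case True
        then have aj: "a = d" "j = i" by simp_all
        show ?thesis
        proof (cases "(b, k) = (d, i)")
          case True then show ?thesis using aj by (simp add: E_def)
        next
          case False
          then have bM: "(b, k) \<in> M" using pq(2) by blast
          have "b \<noteq> d" using bM nd by blast
          moreover have "E d b \<longrightarrow> k \<noteq> i" using usedI[OF bM] i(2) by blast
          ultimately show ?thesis using aj by auto
        qed
      next
        case False
        then have aM: "(a, j) \<in> M" using pq(1) by blast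
        have ad: "a \<noteq> d" using aM nd by blast
        show ?thesis
        proof (cases "(b, k) = (d, i)")
          case True
          then have bk: "b = d" "k = i" by simp_all
          have "E a d \<longrightarrow> j \<noteq> i" using usedI[OF aM] E_sym i(2) by blast
          then show ?thesis using ad bk by auto
        next
          case False
          then have bM: "(b, k) \<in> M" using pq(2) by blast
          show ?thesis using MA(2)[OF aM bM] MA(3)[OF aM bM] by simp
        qed
      qed
      then show "(fst p = fst q \<longrightarrow> snd p = snd q) \<and> (E (fst p) (fst q) \<longrightarrow> snd p \<noteq> snd q)"
        using pj qk by simp
    qed
    qed
    then have "insert (d, i) M = M" using M(2) by blast
    then show False using nd by blast
  qed
  define col where "col d = (SOME i. (d, i) \<in> M)" for d
  have chiM: "(d, col d) \<in> M" if "d \<in> D" for d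
    using tot[OF that] unfolding col_def by (metis someI_ex)
  have "\<forall>d\<in>D. col d \<le> n" using chiM MA(1) by blast
  moreover have "\<forall>d\<in>D. \<forall>d'\<in>D. E d d' \<longrightarrow> col d \<noteq> col d'"
    using chiM MA(3) by (metis fst_conv snd_conv)
  ultimately show ?thesis by blast
qed

end


lemma grp_id:
  fixes x p q z :: "'a::group_add"
  shows "x - (p + q) + p + (q - z) = x - z"
proof -
  have "x - (p + q) + p + (q - z) = x + (- q + - p) + p + (q + - z)"
    by (simp only: diff_conv_add_uminus minus_add)
  also have "\<dots> = x + (- q + (- p + (p + (q + - z))))" by (simp only: add.assoc)
  also have "\<dots> = x + - z" by (simp only: minus_add_cancel)
  also have "\<dots> = x - z" by (simp only: diff_conv_add_uminus)
  finally show ?thesis .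
qed

context bump begin

lemma C0_mem:
  assumes "rho y d < 1/4" "rho (h + y) d' < 1/2"
  shows "d' - d \<in> C0"
proof -
  define a where "a = d' - (h + y)"
  define b where "b = y - d"
  have "rho a 0 = rho (h + y) d'" unfolding a_def using rho_shift[of d' "h + y"] rho_sym by simp
  then have aK: "a \<in> K" using assms(2) rho_K by simp
  have "rho b 0 = rho y d" unfolding b_def using rho_shift[of y d] by simp
  then have bK: "b \<in> K" using assms(1) rho_K by simp
  have "a + h + b = d' - d" unfolding a_def b_def
    by (rule grp_id)
  then have "d' - d = (\<lambda>q. fst q + h + snd q) (a, b)" by simp
  moreover have "(a, b) \<in> K \<times> K" using aK bK by simp
  ultimately show ?thesis unfolding C0_def by (rule image_eqI)
qed

lemma phi_exists:
  "\<exists>n. \<exists>\<phi> :: 'g \<times> nat \<Rightarrow> real. (\<forall>p. 0 \<le> \<phi> p \<and> \<phi> p \<le> 1) \<and>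
     (\<forall>x y k. \<bar>\<phi> (x, k) - \<phi> (y, k)\<bar> \<le> 2 * rho x y) \<and>
     (\<forall>y. \<exists>k\<le>n. 1/2 \<le> \<phi> (h + y, k) - \<phi> (y, k))"
proof -
  obtain D where sep: "\<forall>d\<in>D. \<forall>d'\<in>D. d \<noteq> d' \<longrightarrow> 1/4 \<le> rho d d'" and cov: "\<forall>y. \<exists>d\<in>D. rho y d < 1/4"
    using sep_exists by blast
  obtain Ctr where Ctr: "finite Ctr" "C1 \<subseteq> (\<Union>c\<in>Ctr. {v. rho v c < 1/8})"
    using finite_cover by blast
  obtain col where col: "\<forall>d\<in>D. col d \<le> card Ctr" "\<forall>d\<in>D. \<forall>d'\<in>D. E d d' \<longrightarrow> col d \<noteq> col d'"
    using coloring_exists[of D "card Ctr"] degree_bound[OF sep Ctr] by blast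
  define S where "S y k = insert 1 ((\<lambda>d. 2 * rho y d) ` {d\<in>D. col d = k})" for y k
  define \<phi> where "\<phi> p = Inf (S (fst p) (snd p))" for p
  have Sne: "S y k \<noteq> {}" for y k by (simp add: S_def)
  have Sbdd: "bdd_below (S y k)" for y k
    unfolding S_def by (rule bdd_belowI[where m=0]) (auto intro: rho_nonneg)
  have phi1: "\<phi> (y, k) \<le> 1" for y k
  proof -
    have "1 \<in> S y k" by (simp add: S_def)
    then show ?thesis unfolding \<phi>_def using cInf_lower[OF _ Sbdd] by simp
  qed
  have phi0: "0 \<le> \<phi> (y, k)" for y k
    unfolding \<phi>_def using Sne by (auto intro!: cInf_greatest simp: S_def rho_nonneg)
  have phid: "\<phi> (y, k) \<le> 2 * rho y d" if "d \<in> D" "col d = k" for y k d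
  proof -
    have "2 * rho y d \<in> S y k" using that by (auto simp: S_def)
    then show ?thesis unfolding \<phi>_def using cInf_lower[OF _ Sbdd] by simp
  qed
  have phifar: "1 \<le> \<phi> (z, k)" if "\<forall>d\<in>D. col d = k \<longrightarrow> 1/2 \<le> rho z d" for z k
    unfolding \<phi>_def using Sne that by (force intro!: cInf_greatest simp: S_def)
  have lip1: "\<phi> (x, k) \<le> \<phi> (y, k) + 2 * rho x y" for x y k
  proof -
    have "\<phi> (x, k) - 2 * rho x y \<le> Inf (S y k)"
    proof (rule cInf_greatest[OF Sne])
      fix e assume "e \<in> S y k"
      then consider "e = 1" | d where "d \<in> D" "col d = k" "e = 2 * rho y d" unfolding S_def by blast
      then show "\<phi> (x, k) - 2 * rho x y \<le> e"
      proof cases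
        case 1 then show ?thesis using phi1[of x k] rho_nonneg[of x y] by simp
      next
        case 2
        then show ?thesis using phid[OF 2(1,2), of x] rho_tri[of x d y] by simp
      qed
    qed
    then show ?thesis unfolding \<phi>_def by simp
  qed
  have lip: "\<bar>\<phi> (x, k) - \<phi> (y, k)\<bar> \<le> 2 * rho x y" for x y k
    using lip1[of x k y] lip1[of y k x] rho_sym[of x y] by linarith
  have key: "\<exists>k\<le>card Ctr. 1/2 \<le> \<phi> (h + y, k) - \<phi> (y, k)" for y
  proof -
    obtain d where d: "d \<in> D" "rho y d < 1/4" using cov by blast
    define k where "k = col d"
    have "\<phi> (y, k) < 1/2" using phid[OF d(1) k_def[symmetric], of y] d(2) by simp
    moreover have "1 \<le> \<phi> (h + y, k)"
    proof (rule phifar, intro ballI impI)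
      fix d' assume d': "d' \<in> D" "col d' = k"
      show "1/2 \<le> rho (h + y) d'"
      proof (rule ccontr)
        assume "\<not> 1/2 \<le> rho (h + y) d'"
        then have cl: "rho (h + y) d' < 1/2" by simp
        have "d \<noteq> d'"
        proof
          assume "d = d'"
          then have "rho (h + y) y < 1/2 + 1/4"
            using cl d(2) rho_tri[of "h + y" y d] rho_sym[of y d] by simp
          moreover have "rho (h + y) y = 1" using rho_inv[of h y 0] rho_h by simp
          ultimately show False by simp
        qed
        moreover have "d' - d \<in> C1" using C0_mem[OF d(2) cl] unfolding C1_def by blast
        ultimately have "E d d'" unfolding E_def by blast
        then have "col d \<noteq> col d'" using col(2) d(1) d'(1) by blast
        then show False using d'(2) k_def by simp
      qed
    qed
    ultimately show ?thesis using col(1) d(1) k_def by (intro exI[of _ k]) auto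
  qed
  have "\<forall>p. 0 \<le> \<phi> p \<and> \<phi> p \<le> 1"
  proof
    fix p show "0 \<le> \<phi> p \<and> \<phi> p \<le> 1" using phi0[of "fst p" "snd p"] phi1[of "fst p" "snd p"] by simp
  qed
  then show ?thesis using lip key by blast
qed

end


lemma cont_real_eps:
  fixes f :: "'a \<Rightarrow> real"
  assumes "\<And>x e. x \<in> topspace X \<Longrightarrow> e > 0 \<Longrightarrow> \<exists>U. openin X U \<and> x \<in> U \<and> (\<forall>y\<in>U. \<bar>f y - f x\<bar> < e)"
  shows "continuous_map X euclideanreal f"
proof -
  have "continuous_map X Met_TC.mtopology f"
    unfolding Met_TC.continuous_map_to_metric
    using assms by (simp add: dist_real_def abs_minus_commute)
  then show ?thesis by simp
qed

context bump begin

lemma free_space: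
  "\<exists>(X :: ('g \<times> nat \<Rightarrow> real) topology) a. G_space X a \<and> (\<forall>x\<in>topspace X. a h x \<noteq> x)"
proof -
  obtain n and \<phi> :: "'g \<times> nat \<Rightarrow> real" where
    phi01: "\<forall>p. 0 \<le> \<phi> p \<and> \<phi> p \<le> 1" and
    philip: "\<forall>x y k. \<bar>\<phi> (x, k) - \<phi> (y, k)\<bar> \<le> 2 * rho x y" and
    phiR: "\<forall>y. \<exists>k\<le>n. 1/2 \<le> \<phi> (h + y, k) - \<phi> (y, k)"
    using phi_exists by blast
  define P where "P = product_topology (\<lambda>_. top_of_set {0..1::real}) (UNIV :: ('g \<times> nat) set)"
  have tP: "\<psi> \<in> topspace P \<longleftrightarrow> (\<forall>q. 0 \<le> \<psi> q \<and> \<psi> q \<le> 1)" for \<psi>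
    by (simp add: P_def PiE_UNIV_domain Pi_iff)
  define L where "L = {\<psi> :: 'g \<times> nat \<Rightarrow> real. \<forall>x y k. \<bar>\<psi> (x, k) - \<psi> (y, k)\<bar> \<le> 2 * rho x y}"
  define R where "R = {\<psi> :: 'g \<times> nat \<Rightarrow> real. \<forall>y. \<exists>k\<le>n. 1/2 \<le> \<psi> (h + y, k) - \<psi> (y, k)}"
  define T where "T = topspace P \<inter> L \<inter> R"
  define X where "X = subtopology P T"
  define a where "a g \<psi> = (\<lambda>q. \<psi> (fst q + g, snd q))" for g :: 'g and \<psi> :: "'g \<times> nat \<Rightarrow> real"
  have tX: "topspace X = T" unfolding X_def T_def by auto
  have evP: "continuous_map P euclideanreal (\<lambda>\<psi>. \<psi> q)" for q
  proof -
    have "continuous_map P (top_of_set {0..1}) (\<lambda>\<psi>. \<psi> q)"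
      unfolding P_def by (rule continuous_map_product_projection) simp
    then show ?thesis by (simp add: continuous_map_in_subtopology)
  qed
  have evX: "continuous_map X euclideanreal (\<lambda>\<psi>. \<psi> q)" for q
    unfolding X_def by (rule continuous_map_from_subtopology[OF evP])
  define A where "A x y k = {\<psi> \<in> topspace P. \<bar>\<psi> (x, k) - \<psi> (y, k)\<bar> \<in> {..2 * rho x y}}" for x y k
  define B where "B y = (\<Union>k\<in>{..n}. {\<psi> \<in> topspace P. \<psi> (h + y, k) - \<psi> (y, k) \<in> {1/2..}})" for y
  have Ac: "closedin P (A x y k)" for x y k
  proof -
    have "continuous_map P euclideanreal (\<lambda>\<psi>. \<bar>\<psi> (x, k) - \<psi> (y, k)\<bar>)"
      by (intro continuous_map_real_abs continuous_map_diff evP)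
    then show ?thesis unfolding A_def by (rule closedin_continuous_map_preimage) simp
  qed
  have Bk: "closedin P {\<psi> \<in> topspace P. \<psi> (h + y, k) - \<psi> (y, k) \<in> {1/2..}}" for y k
  proof -
    have "continuous_map P euclideanreal (\<lambda>\<psi>. \<psi> (h + y, k) - \<psi> (y, k))"
      by (intro continuous_map_diff evP)
    then show ?thesis by (rule closedin_continuous_map_preimage) simp
  qed
  have Bc: "closedin P (B y)" for y
    unfolding B_def by (rule closedin_Union) (use Bk in \<open>auto simp del: atLeast_iff\<close>)
  have Teq: "T = topspace P \<inter> (\<Inter>x. \<Inter>y. \<Inter>k. A x y k) \<inter> (\<Inter>y. B y)"
    unfolding T_def L_def R_def A_def B_def by auto
  have Tc: "closedin P T"
    unfolding Teq by (intro closedin_Int closedin_topspace closedin_INT Ac Bc) auto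
  have cP: "compact_space P"
    unfolding P_def compact_space_product_topology
    by (simp add: compact_space_subtopology)
  have cX: "compact_space X"
    unfolding X_def
    by (rule compact_space_subtopology, rule closed_compactin[OF _ _ Tc])
       (use cP in \<open>auto simp: compact_space_def T_def\<close>)
  have hP: "Hausdorff_space P"
    unfolding P_def Hausdorff_space_product_topology
    by (simp add: Hausdorff_space_subtopology)
  have hX: "Hausdorff_space X" unfolding X_def by (rule Hausdorff_space_subtopology[OF hP])
  have phiT: "\<phi> \<in> T" unfolding T_def L_def R_def using tP phi01 philip phiR by auto
  have aT: "a g \<psi> \<in> T" if "\<psi> \<in> T" for g \<psi>
  proof -
    have "a g \<psi> \<in> topspace P" using that tP by (simp add: T_def a_def)
    moreover have "a g \<psi> \<in> L"
      unfolding L_def a_def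
    proof (intro CollectI allI)
      fix x y k
      have "\<bar>\<psi> (x + g, k) - \<psi> (y + g, k)\<bar> \<le> 2 * rho (x + g) (y + g)" using that by (simp add: T_def L_def)
      then show "\<bar>\<psi> (fst (x, k) + g, snd (x, k)) - \<psi> (fst (y, k) + g, snd (y, k))\<bar> \<le> 2 * rho x y"
        by (simp add: rho_inv)
    qed
    moreover have "a g \<psi> \<in> R"
      unfolding R_def a_def
    proof (intro CollectI allI)
      fix y
      have "\<forall>y. \<exists>k\<le>n. 1/2 \<le> \<psi> (h + y, k) - \<psi> (y, k)" using that by (simp add: T_def R_def)
      then obtain k where "k \<le> n" "1/2 \<le> \<psi> (h + (y + g), k) - \<psi> (y + g, k)" by blast
      then show "\<exists>k\<le>n. 1/2 \<le> \<psi> (fst (h + y, k) + g, snd (h + y, k)) - \<psi> (fst (y, k) + g, snd (y, k))"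
        by (auto simp: add.assoc)
    qed
    ultimately show ?thesis by (simp add: T_def)
  qed
  have c1: "continuous_map (prod_topology euclidean X) P (\<lambda>(g, \<psi>). a g \<psi>)"
  proof -
    have "\<forall>q. continuous_map (prod_topology euclidean X) (top_of_set {0..1}) (\<lambda>z. (case z of (g, \<psi>) \<Rightarrow> a g \<psi>) q)"
    proof
      fix q :: "'g \<times> nat"
      obtain y k where q: "q = (y, k)" by (cases q)
      have c: "continuous_map (prod_topology euclidean X) euclideanreal (\<lambda>z. (case z of (g, \<psi>) \<Rightarrow> a g \<psi>) q)"
      proof (rule cont_real_eps)
        fix z :: "'g \<times> ('g \<times> nat \<Rightarrow> real)" and e :: real assume z: "z \<in> topspace (prod_topology euclidean X)" and e: "e > 0"
        obtain g0 \<psi>0 where z0: "z = (g0, \<psi>0)" by (cases z)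
        have \<psi>0: "\<psi>0 \<in> T" using z z0 tX by simp
        define V where "V = (\<lambda>g. y + g) -` {v. rho v (y + g0) < e/4}"
        define W where "W = {\<psi> \<in> topspace X. \<psi> (y + g0, k) \<in> ball (\<psi>0 (y + g0, k)) (e/2)}"
        have oV: "open V" unfolding V_def
          by (rule open_vimage[OF rho_ball_open]) (intro continuous_intros)
        have oW: "openin X W" unfolding W_def
          by (rule openin_continuous_map_preimage[OF evX]) simp
        have g0V: "g0 \<in> V" using e by (simp add: V_def rho_refl)
        have \<psi>0W: "\<psi>0 \<in> W" using e \<psi>0 tX by (simp add: W_def)
        show "\<exists>U. openin (prod_topology euclidean X) U \<and> z \<in> U \<and>
                (\<forall>w\<in>U. \<bar>(case w of (g, \<psi>) \<Rightarrow> a g \<psi>) q - (case z of (g, \<psi>) \<Rightarrow> a g \<psi>) q\<bar> < e)"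
        proof (intro exI conjI)
          show "openin (prod_topology euclidean X) (V \<times> W)"
            using oV oW by (simp add: openin_prod_Times_iff)
          show "z \<in> V \<times> W" using z0 g0V \<psi>0W by simp
          show "\<forall>w\<in>V \<times> W. \<bar>(case w of (g, \<psi>) \<Rightarrow> a g \<psi>) q - (case z of (g, \<psi>) \<Rightarrow> a g \<psi>) q\<bar> < e"
          proof
            fix w assume w: "w \<in> V \<times> W"
            obtain g \<psi> where w0: "w = (g, \<psi>)" by (cases w)
            have gV: "rho (y + g) (y + g0) < e/4" using w w0 by (simp add: V_def)
            have \<psi>W: "\<psi> \<in> T" "\<bar>\<psi> (y + g0, k) - \<psi>0 (y + g0, k)\<bar> < e/2"
              using w w0 tX by (auto simp: W_def dist_real_def abs_minus_commute)
            have "\<bar>\<psi> (y + g, k) - \<psi> (y + g0, k)\<bar> \<le> 2 * rho (y + g) (y + g0)"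
              using \<psi>W(1) by (simp add: T_def L_def)
            then have "\<bar>\<psi> (y + g, k) - \<psi>0 (y + g0, k)\<bar> < e"
              using gV \<psi>W(2) by linarith
            then show "\<bar>(case w of (g, \<psi>) \<Rightarrow> a g \<psi>) q - (case z of (g, \<psi>) \<Rightarrow> a g \<psi>) q\<bar> < e"
              using w0 z0 q by (simp add: a_def)
          qed
        qed
      qed
      have r: "(\<lambda>z. (case z of (g, \<psi>) \<Rightarrow> a g \<psi>) q) \<in> topspace (prod_topology euclidean X) \<rightarrow> {0..1}"
      proof (rule Pi_I)
        fix z :: "'g \<times> ('g \<times> nat \<Rightarrow> real)" assume z: "z \<in> topspace (prod_topology euclidean X)"
        obtain g \<psi> where z0: "z = (g, \<psi>)" by (cases z)
        have "\<psi> \<in> T" using z z0 tX by simp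
        then have "a g \<psi> \<in> topspace P" using aT by (simp add: T_def)
        then have "0 \<le> a g \<psi> q \<and> a g \<psi> q \<le> 1" using tP by blast
        then show "(case z of (g, \<psi>) \<Rightarrow> a g \<psi>) q \<in> {0..1}" using z0 by simp
      qed
      show "continuous_map (prod_topology euclidean X) (top_of_set {0..1}) (\<lambda>z. (case z of (g, \<psi>) \<Rightarrow> a g \<psi>) q)"
        using c r by (simp add: continuous_map_in_subtopology image_subset_iff_funcset)
    qed
    then show ?thesis
      unfolding P_def continuous_map_componentwise_UNIV by simp
  qed
  have c2: "(\<lambda>(g, \<psi>). a g \<psi>) \<in> topspace (prod_topology euclidean X) \<rightarrow> T"
    using aT tX by auto
  have "continuous_map (prod_topology euclidean X) (subtopology P T) (\<lambda>(g, \<psi>). a g \<psi>)"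
    using c1 c2 by (simp add: continuous_map_in_subtopology)
  then have cont: "continuous_map (prod_topology euclidean X) X (\<lambda>(g, \<psi>). a g \<psi>)"
    by (simp add: X_def[symmetric])
  have "G_space X a"
    unfolding G_space_def
  proof (intro conjI)
    show "topspace X \<noteq> {}" using phiT tX by auto
    show "compact_space X" by (rule cX)
    show "Hausdorff_space X" by (rule hX)
    show "\<forall>g. \<forall>x\<in>topspace X. a g x \<in> topspace X" using aT tX by auto
    show "\<forall>x\<in>topspace X. a 0 x = x" by (simp add: a_def)
    show "\<forall>g l. \<forall>x\<in>topspace X. a (g + l) x = a g (a l x)" by (simp add: a_def add.assoc)
    show "continuous_map (prod_topology euclidean X) X (\<lambda>(g, x). a g x)" by (rule cont)
  qed
  moreover have "\<forall>x\<in>topspace X. a h x \<noteq> x"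
  proof
    fix \<psi> assume "\<psi> \<in> topspace X"
    then have "\<forall>y. \<exists>k\<le>n. 1/2 \<le> \<psi> (h + y, k) - \<psi> (y, k)" using tX by (simp add: T_def R_def)
    then obtain k where "1/2 \<le> \<psi> (h + 0, k) - \<psi> (0, k)" by blast
    moreover have "a h \<psi> (0, k) = \<psi> (0 + h, k)" by (simp add: a_def)
    ultimately show "a h \<psi> \<noteq> \<psi>" by auto
  qed
  ultimately show ?thesis by blast
qed

end



theorem mainTheorem2:
  fixes H :: "'g::{topological_group_add, t2_space} set"
  assumes "locally_compact_space (euclidean :: 'g topology)"
    and "\<not> compact (UNIV :: 'g set)"
    and "is_subgroup H"
    and "{0} \<subset> H"
  shows "\<not> rel_ext_amenable TYPE('g set set) H"
proof
  assume ra: "rel_ext_amenable TYPE('g set set) H"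
  have "\<exists>h. h \<in> H \<and> h \<noteq> 0"
  proof (rule ccontr)
    assume "\<not> (\<exists>h. h \<in> H \<and> h \<noteq> 0)"
    then have "H \<subseteq> {0}" by blast
    then show False using assms(4) by blast
  qed
  then obtain h where h: "h \<in> H" "h \<noteq> 0" by blast
  obtain u :: "'g \<Rightarrow> real" and K where uK: "continuous_on UNIV u" "\<forall>x. 0 \<le> u x \<and> u x \<le> 1" "u 0 = 1" "u h = 0"
       "compact K" "\<forall>x. u x \<noteq> 0 \<longrightarrow> x \<in> K"
    using exists_bump[OF assms(1) h(2)] by blast
  interpret bump u K h
  proof
    show "continuous_on UNIV u" by (rule uK(1))
    show "\<And>x. 0 \<le> u x \<and> u x \<le> 1" using uK(2) by blast
    show "u 0 = 1" "u h = 0" by (rule uK(3), rule uK(4))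
    show "compact K" by (rule uK(5))
    show "\<And>x. u x \<noteq> 0 \<Longrightarrow> x \<in> K" using uK(6) by blast
  qed
  obtain X :: "('g \<times> nat \<Rightarrow> real) topology" and a where Xa: "G_space X a" "\<forall>x\<in>topspace X. a h x \<noteq> x"
    using free_space by auto
  have "infinite (UNIV :: 'g set)"
  proof
    assume "finite (UNIV :: 'g set)"
    then have "compact (UNIV :: 'g set)" by (rule finite_imp_compact)
    then show False using assms(2) by simp
  qed
  then obtain f :: "('g \<times> nat \<Rightarrow> real) \<Rightarrow> 'g set set" where f: "inj f" using inj_encode by blast
  obtain Y :: "'g set set topology" and b where Yb: "G_space Y b"
    "\<forall>k. \<forall>y\<in>topspace Y. b k y = y \<longrightarrow> (\<exists>x\<in>topspace X. a k x = x)"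
    using G_space_transfer[OF Xa(1) f] by blast
  obtain x0 where "x0 \<in> topspace Y" "\<forall>k\<in>H. b k x0 = x0"
  proof -
    have "\<forall>(X::'g set set topology) (a::'g \<Rightarrow> 'g set set \<Rightarrow> 'g set set). G_space X a \<longrightarrow>
        (\<exists>x0\<in>topspace X. \<forall>h\<in>H. a h x0 = x0)"
      using ra unfolding rel_ext_amenable_def by simp
    then have "\<exists>x0\<in>topspace Y. \<forall>h\<in>H. b h x0 = x0" using Yb(1) by blast
    then show ?thesis using that by blast
  qed
  then have "b h x0 = x0" using h(1) by blast
  then have "\<exists>x\<in>topspace X. a h x = x" using Yb(2) \<open>x0 \<in> topspace Y\<close> by blast
  then show False using Xa(2) by blast
qed



end
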